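(* Let $\mathcal{A}=\mathcal{A}_1\cup\mathcal{A}_2$ be an arrangement of lines in $\mathbb{P}^3$, with $\mathcal{A}_1,\mathcal{A}_2$ disjoint, $|\mathcal{A}_1|=a$, $|\mathcal{A}_2|=b$, such that every line of $\mathcal{A}_1$ meets every line of $\mathcal{A}_2$ and any two distinct lines in the same $\mathcal{A}_i$ are disjoint (so $\Gamma(\mathcal{A})\cong K_{a,b}$), where $a,b$ are positive integers with $3\le a\le b$ or $a\le b\le 3$. Then there is a smooth quadric surface $Q\subset\mathbb{P}^3$ containing all lines of $\mathcal{A}$; specifically, for each $i=1,2$, the lines of $\mathcal{A}_i$ all lie in one of the two rulings of $Q$.
   Context: A line arrangement is a finite collection of distinct lines in $\mathbb{P}^3$, each defined over the (arbitrary) ground field. A smooth quadric surface $Q\cong\mathbb{P}^1\times\mathbb{P}^1$ has two rulings, i.e. two families of lines on it. *)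

theory Defs
  imports "HOL-Analysis.Analysis"
begin

text \<open>Projective 3-space over a field 'k is modelled by the vector space 'k^4
 (homogeneous coordinates).  A projective line is a 2-dimensional linear
 subspace of 'k^4 (the affine cone over it).  Two lines meet iff their
 cones share a nonzero vector, and are disjoint iff the cones meet only in 0.\<close>

definition is_line :: "('k::field ^ 4) set \<Rightarrow> bool" where
  "is_line L \<longleftrightarrow> (\<exists>u v. (\<forall>a b. a *s u + b *s v = 0 \<longrightarrow> a = 0 \<and> b = 0)
                        \<and> L = {a *s u + b *s v | a b. True})"

definition lines_meet :: "('k::field ^ 4) set \<Rightarrow> ('k ^ 4) set \<Rightarrow> bool" where
  "lines_meet L L' \<longleftrightarrow> (\<exists>x. x \<noteq> 0 \<and> x \<in> L \<and> x \<in> L')"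

definition lines_disjoint :: "('k::field ^ 4) set \<Rightarrow> ('k ^ 4) set \<Rightarrow> bool" where
  "lines_disjoint L L' \<longleftrightarrow> L \<inter> L' = {0}"

text \<open>Smooth quadric surfaces: Q = (segre-quadric) transported by an invertible
 linear change of coordinates M, i.e. Q = {x. segre (M x) = 0} with
 segre y = y1*y4 - y2*y3, the image of P^1 x P^1 under the Segre embedding
 ([s:t],[p:q]) |-> [sp:sq:tp:tq].\<close>

definition segre_form :: "'k::field ^ 4 \<Rightarrow> 'k" where
  "segre_form y = y $ 1 * y $ 4 - y $ 2 * y $ 3"

definition quadric :: "'k::field ^ 4 ^ 4 \<Rightarrow> ('k ^ 4) set" where
  "quadric M = {x. segre_form (M *v x) = 0}"

definition smooth_quadric_matrix :: "'k::field ^ 4 ^ 4 \<Rightarrow> bool" where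
  "smooth_quadric_matrix M \<longleftrightarrow> invertible M"

text \<open>The two rulings of the quadric given by M:
 ruling True  = lines {[sp:sq:tp:tq]} for fixed [p:q] (varying [s:t]),
 ruling False = lines {[ps:pt:qs:qt]} for fixed [p:q] (varying [s:t]).\<close>

definition in_ruling :: "bool \<Rightarrow> 'k::field ^ 4 ^ 4 \<Rightarrow> ('k ^ 4) set \<Rightarrow> bool" where
  "in_ruling r M L \<longleftrightarrow> (\<exists>p q. (p, q) \<noteq> (0, 0) \<and>
      L = {x. \<exists>s t. M *v x = (if r then vector [s * p, s * q, t * p, t * q]
                                    else vector [p * s, p * t, q * s, q * t])})"

end

theory Submission
  imports Defs
begin

lemma vector_4 [simp]:
 "(vector [x,y,z,w] ::('a::zero)^4)$1 = x"
 "(vector [x,y,z,w] ::('a::zero)^4)$2 = y"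
 "(vector [x,y,z,w] ::('a::zero)^4)$3 = z"
 "(vector [x,y,z,w] ::('a::zero)^4)$4 = w"
  unfolding vector_def by simp_all

lemma vec4_eq: "(x::'a^4) = y \<longleftrightarrow> x$1 = y$1 \<and> x$2 = y$2 \<and> x$3 = y$3 \<and> x$4 = y$4"
  by (simp add: vec_eq_iff forall_4)

definition sp2 :: "'k::field ^ 4 \<Rightarrow> 'k ^ 4 \<Rightarrow> ('k ^ 4) set" where
  "sp2 u v = {a *s u + b *s v | a b. True}"

definition ind2 :: "'k::field ^ 4 \<Rightarrow> 'k ^ 4 \<Rightarrow> bool" where
  "ind2 u v \<longleftrightarrow> (\<forall>a b. a *s u + b *s v = 0 \<longrightarrow> a = 0 \<and> b = 0)"

definition ind4 :: "'k::field ^ 4 \<Rightarrow> 'k ^ 4 \<Rightarrow> 'k ^ 4 \<Rightarrow> 'k ^ 4 \<Rightarrow> bool" where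
  "ind4 e1 e2 e3 e4 \<longleftrightarrow> (\<forall>c1 c2 c3 c4. c1 *s e1 + c2 *s e2 + c3 *s e3 + c4 *s e4 = 0
      \<longrightarrow> c1 = 0 \<and> c2 = 0 \<and> c3 = 0 \<and> c4 = 0)"

lemma is_line_sp2: "is_line L \<longleftrightarrow> (\<exists>u v. ind2 u v \<and> L = sp2 u v)"
  unfolding is_line_def ind2_def sp2_def by blast

lemma mem_sp2: "x \<in> sp2 u v \<longleftrightarrow> (\<exists>a b. x = a *s u + b *s v)"
  unfolding sp2_def by blast

lemma sp2_scale: "x \<in> sp2 u v \<Longrightarrow> c *s x \<in> sp2 u v"
  unfolding mem_sp2 apply clarify
  subgoal for a b by (rule exI[of _ "c*a"], rule exI[of _ "c*b"]) (simp add: vec4_eq algebra_simps)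
  done

lemma sp2_zero: "0 \<in> sp2 u v"
  unfolding mem_sp2 by (rule exI[of _ 0], rule exI[of _ 0]) simp

lemma sp2_add: "x \<in> sp2 u v \<Longrightarrow> y \<in> sp2 u v \<Longrightarrow> x + y \<in> sp2 u v"
proof -
  assume "x \<in> sp2 u v" "y \<in> sp2 u v"
  then obtain a b c d where "x = a *s u + b *s v" "y = c *s u + d *s v" unfolding mem_sp2 by blast
  then have "x + y = (a+c) *s u + (b+d) *s v" by (simp add: vec4_eq algebra_simps)
  then show ?thesis unfolding mem_sp2 by blast
qed

lemma sp2_sub: "u \<in> sp2 x y \<Longrightarrow> v \<in> sp2 x y \<Longrightarrow> sp2 u v \<subseteq> sp2 x y"
  unfolding sp2_def[of u v] by (auto intro!: sp2_add sp2_scale)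

lemma sp2_gen: "u \<in> sp2 u v" "v \<in> sp2 u v"
  unfolding mem_sp2
  by (rule exI[of _ 1], rule exI[of _ 0], simp) (rule exI[of _ 0], rule exI[of _ 1], simp)

lemma ind2_nz: "ind2 x y \<Longrightarrow> x \<noteq> 0"
proof
  assume "ind2 x y" "x = 0"
  hence "(1::'a) *s x + 0 *s y = 0" by simp
  with \<open>ind2 x y\<close> have "(1::'a) = 0 \<or> (1::'a) = 0" unfolding ind2_def by blast
  thus False by simp
qed

lemma ind2_nz2: "ind2 x y \<Longrightarrow> y \<noteq> 0"
proof
  assume "ind2 x y" "y = 0"
  hence "0 *s x + (1::'a) *s y = 0" by simp
  with \<open>ind2 x y\<close> have "(1::'a) = 0 \<or> (1::'a) = 0" unfolding ind2_def by blast
  thus False by simp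
qed

lemma sp2_two_points:
  assumes "ind2 u v" "x \<in> sp2 u v" "y \<in> sp2 u v" "ind2 x y"
  shows "sp2 u v = sp2 x y"
proof
  show "sp2 x y \<subseteq> sp2 u v" using assms by (intro sp2_sub)
  obtain a b c d where x: "x = a *s u + b *s v" and y: "y = c *s u + d *s v"
    using assms unfolding mem_sp2 by blast
  define D where "D = a * d - b * c"
  have "D \<noteq> 0"
  proof
    assume D0: "D = 0"
    have "d *s x + (- b) *s y = D *s u" using x y unfolding D_def by (simp add: vec4_eq algebra_simps)
    hence "d *s x + (- b) *s y = 0" using D0 by simp
    hence "d = 0 \<and> - b = 0" using assms(4) unfolding ind2_def by blast
    hence "d = 0 \<and> b = 0" by simp
    moreover have "(- c) *s x + a *s y = D *s v" using x y unfolding D_def by (simp add: vec4_eq algebra_simps)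
    hence "(- c) *s x + a *s y = 0" using D0 by simp
    hence "- c = 0 \<and> a = 0" using assms(4) unfolding ind2_def by blast
    hence "c = 0 \<and> a = 0" by simp
    ultimately have "x = 0" using x by simp
    thus False using ind2_nz[OF assms(4)] by simp
  qed
  have e1: "d *s x + (- b) *s y = D *s u" using x y unfolding D_def by (simp add: vec4_eq algebra_simps)
  have "u = (1/D) *s (D *s u)" using \<open>D \<noteq> 0\<close> by simp
  also have "\<dots> = (1/D) *s (d *s x + (- b) *s y)" using e1 by simp
  also have "\<dots> = (d / D) *s x + (- b / D) *s y" by (simp add: vec4_eq algebra_simps)
  finally have U: "u \<in> sp2 x y" unfolding mem_sp2 by blast
  have e2: "(- c) *s x + a *s y = D *s v" using x y unfolding D_def by (simp add: vec4_eq algebra_simps)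
  have "v = (1/D) *s (D *s v)" using \<open>D \<noteq> 0\<close> by simp
  also have "\<dots> = (1/D) *s ((- c) *s x + a *s y)" using e2 by simp
  also have "\<dots> = (- c / D) *s x + (a / D) *s y" by (simp add: vec4_eq algebra_simps)
  finally have "v \<in> sp2 x y" unfolding mem_sp2 by blast
  with U show "sp2 u v \<subseteq> sp2 x y" by (intro sp2_sub)
qed

lemma sp2_exchange:
  assumes "ind2 u v" "x \<in> sp2 u v" "x \<noteq> 0"
  shows "\<exists>w. ind2 x w \<and> sp2 u v = sp2 x w"
proof -
  obtain a b where x: "x = a *s u + b *s v" using assms unfolding mem_sp2 by blast
  show ?thesis
  proof (cases "a = 0")
    case False
    have "ind2 x v" unfolding ind2_def
    proof (intro allI impI)
      fix \<alpha> \<beta> assume "\<alpha> *s x + \<beta> *s v = 0"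
      hence "(\<alpha> * a) *s u + (\<alpha> * b + \<beta>) *s v = 0" using x by (simp add: vec4_eq algebra_simps)
      hence "\<alpha> * a = 0 \<and> \<alpha> * b + \<beta> = 0" using assms(1) unfolding ind2_def by blast
      thus "\<alpha> = 0 \<and> \<beta> = 0" using False by auto
    qed
    thus ?thesis using sp2_two_points[OF assms(1,2) sp2_gen(2) \<open>ind2 x v\<close>] by blast
  next
    case True
    hence b: "b \<noteq> 0" using x assms(3) by auto
    have "ind2 x u" unfolding ind2_def
    proof (intro allI impI)
      fix \<alpha> \<beta> assume "\<alpha> *s x + \<beta> *s u = 0"
      hence "\<beta> *s u + (\<alpha> * b) *s v = 0" using x True by (simp add: vec4_eq algebra_simps)
      hence "\<beta> = 0 \<and> \<alpha> * b = 0" using assms(1) unfolding ind2_def by blast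
      thus "\<alpha> = 0 \<and> \<beta> = 0" using b by simp
    qed
    thus ?thesis using sp2_two_points[OF assms(1,2) sp2_gen(1) \<open>ind2 x u\<close>] by blast
  qed
qed

lemma meet_points_ind2:
  assumes "x \<in> sp2 u v" "y \<in> sp2 u' v'" "sp2 u v \<inter> sp2 u' v' = {0}" "x \<noteq> 0" "y \<noteq> 0"
  shows "ind2 x y"
  unfolding ind2_def
proof (intro allI impI)
  fix a b assume h: "a *s x + b *s y = 0"
  hence "a *s x = - (b *s y)" by (simp only: eq_neg_iff_add_eq_0)
  hence "a *s x = (- b) *s y" by (simp add: vec4_eq)
  moreover have "a *s x \<in> sp2 u v" "(- b) *s y \<in> sp2 u' v'" using assms(1,2) by (blast intro: sp2_scale)+
  ultimately have "a *s x \<in> sp2 u v \<inter> sp2 u' v'" by simp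
  hence "a *s x = 0" using assms(3) by blast
  hence "a = 0" using assms(4) by simp
  with h have "b *s y = 0" by simp
  thus "a = 0 \<and> b = 0" using \<open>a = 0\<close> assms(5) by simp
qed

lemma disjoint_ind4:
  assumes "ind2 u1 u2" "ind2 v1 v2" "sp2 u1 u2 \<inter> sp2 v1 v2 = {0}"
  shows "ind4 u1 u2 v1 v2"
  unfolding ind4_def
proof (intro allI impI)
  fix c1 c2 c3 c4 assume h: "c1 *s u1 + c2 *s u2 + c3 *s v1 + c4 *s v2 = 0"
  hence "(c1 *s u1 + c2 *s u2) + (c3 *s v1 + c4 *s v2) = 0" by (simp add: add.assoc)
  hence "c1 *s u1 + c2 *s u2 = - (c3 *s v1 + c4 *s v2)" by (simp only: eq_neg_iff_add_eq_0)
  hence e: "c1 *s u1 + c2 *s u2 = (- c3) *s v1 + (- c4) *s v2" by (simp add: vec4_eq)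
  have "c1 *s u1 + c2 *s u2 \<in> sp2 u1 u2" unfolding mem_sp2 by blast
  moreover have "(- c3) *s v1 + (- c4) *s v2 \<in> sp2 v1 v2" unfolding mem_sp2 by blast
  ultimately have "c1 *s u1 + c2 *s u2 \<in> sp2 u1 u2 \<inter> sp2 v1 v2" using e by simp
  hence "c1 *s u1 + c2 *s u2 = 0" using assms(3) by blast
  hence "c1 *s u1 + c2 *s u2 = 0" "(- c3) *s v1 + (- c4) *s v2 = 0" using e by simp_all
  hence "c1 = 0 \<and> c2 = 0" "- c3 = 0 \<and> - c4 = 0" using assms(1,2) unfolding ind2_def by blast+
  thus "c1 = 0 \<and> c2 = 0 \<and> c3 = 0 \<and> c4 = 0" by simp
qed

lemma norm_basis:
  fixes e1 e2 e3 e4 :: "'a::field ^ 4"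
  assumes "ind4 e1 e2 e3 e4"
  shows "\<exists>M::'a^4^4. invertible M
    \<and> (\<forall>c1 c2 c3 c4. M *v (c1 *s e1 + c2 *s e2 + c3 *s e3 + c4 *s e4) = vector [c1, c2, c3, c4])
    \<and> (\<forall>x. \<exists>c1 c2 c3 c4. x = c1 *s e1 + c2 *s e2 + c3 *s e3 + c4 *s e4)"
proof -
  define col :: "4 \<Rightarrow> 'a^4" where "col j = (if j = 1 then e1 else if j = 2 then e2 else if j = 3 then e3 else e4)" for j
  define P :: "'a^4^4" where "P = (\<chi> i j. col j $ i)"
  have Pv: "P *v c = c$1 *s e1 + c$2 *s e2 + c$3 *s e3 + c$4 *s e4" for c
    by (simp add: vec4_eq matrix_vector_mult_def P_def sum_4 col_def algebra_simps)
  have "\<forall>c. P *v c = 0 \<longrightarrow> c = 0"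
  proof (intro allI impI)
    fix c assume "P *v c = 0"
    hence "c$1 = 0 \<and> c$2 = 0 \<and> c$3 = 0 \<and> c$4 = 0" using assms Pv unfolding ind4_def by metis
    thus "c = 0" by (simp add: vec4_eq)
  qed
  hence "invertible P" by (simp add: invertible_left_inverse matrix_left_invertible_ker)
  then obtain M where PM: "P ** M = mat 1" and MP: "M ** P = mat 1" unfolding invertible_def by blast
  have "invertible M" unfolding invertible_def using PM MP by blast
  moreover have "M *v (c1 *s e1 + c2 *s e2 + c3 *s e3 + c4 *s e4) = vector [c1, c2, c3, c4]" for c1 c2 c3 c4
  proof -
    have "c1 *s e1 + c2 *s e2 + c3 *s e3 + c4 *s e4 = P *v vector [c1, c2, c3, c4]" by (simp add: Pv)
    hence "M *v (c1 *s e1 + c2 *s e2 + c3 *s e3 + c4 *s e4) = (M ** P) *v vector [c1, c2, c3, c4]"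
      by (simp add: matrix_vector_mul_assoc)
    thus ?thesis using MP by simp
  qed
  moreover have "\<exists>c1 c2 c3 c4. x = c1 *s e1 + c2 *s e2 + c3 *s e3 + c4 *s e4" for x
  proof -
    have "x = P *v (M *v x)" using PM by (simp add: matrix_vector_mul_assoc)
    thus ?thesis unfolding Pv by blast
  qed
  ultimately show ?thesis by blast
qed

lemma mv_lin: "(A::'a::field^4^4) *v (a *s u + b *s v) = a *s (A *v u) + b *s (A *v v)"
  by (simp add: vec4_eq matrix_vector_mult_def sum_4 algebra_simps)

lemma image_sp2: "((*v) (A::'a::field^4^4)) ` sp2 u v = sp2 (A *v u) (A *v v)"
proof
  show "((*v) A) ` sp2 u v \<subseteq> sp2 (A *v u) (A *v v)" unfolding sp2_def by (auto simp: mv_lin) blast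
  show "sp2 (A *v u) (A *v v) \<subseteq> ((*v) A) ` sp2 u v"
  proof
    fix y assume "y \<in> sp2 (A *v u) (A *v v)"
    then obtain a b where "y = a *s (A *v u) + b *s (A *v v)" unfolding mem_sp2 by blast
    hence "y = A *v (a *s u + b *s v)" by (simp add: mv_lin)
    moreover have "a *s u + b *s v \<in> sp2 u v" unfolding mem_sp2 by blast
    ultimately show "y \<in> ((*v) A) ` sp2 u v" by blast
  qed
qed

lemma ind2_image: "inj ((*v) (A::'a::field^4^4)) \<Longrightarrow> ind2 u v \<Longrightarrow> ind2 (A *v u) (A *v v)"
  unfolding ind2_def
proof (intro allI impI)
  fix a b assume "inj ((*v) A)" "\<forall>a b. a *s u + b *s v = 0 \<longrightarrow> a = 0 \<and> b = 0" "a *s (A *v u) + b *s (A *v v) = 0"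
  hence "A *v (a *s u + b *s v) = A *v 0" by (simp add: mv_lin)
  hence "a *s u + b *s v = 0" using \<open>inj ((*v) A)\<close> by (meson injD)
  thus "a = 0 \<and> b = 0" using \<open>\<forall>a b. _\<close> by blast
qed

lemma is_line_image: "invertible (A::'a::field^4^4) \<Longrightarrow> is_line L \<Longrightarrow> is_line (((*v) A) ` L)"
  unfolding is_line_sp2 using image_sp2 ind2_image inj_matrix_vector_mult by metis

lemma meet_image: "invertible (A::'a::field^4^4) \<Longrightarrow> lines_meet L L' \<Longrightarrow> lines_meet (((*v) A) ` L) (((*v) A) ` L')"
  unfolding lines_meet_def
proof -
  assume "invertible A" "\<exists>x. x \<noteq> 0 \<and> x \<in> L \<and> x \<in> L'"
  then obtain x where x: "x \<noteq> 0" "x \<in> L" "x \<in> L'" by blast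
  have "A *v x \<noteq> 0" using x(1) inj_matrix_vector_mult[OF \<open>invertible A\<close>]
    by (metis injD matrix_vector_mult_0_right)
  thus "\<exists>x. x \<noteq> 0 \<and> x \<in> ((*v) A) ` L \<and> x \<in> ((*v) A) ` L'" using x by blast
qed

lemma disj_image: "invertible (A::'a::field^4^4) \<Longrightarrow> lines_disjoint L L' \<Longrightarrow> lines_disjoint (((*v) A) ` L) (((*v) A) ` L')"
  unfolding lines_disjoint_def
  by (simp add: image_Int[symmetric] inj_matrix_vector_mult)

definition std :: "bool \<Rightarrow> 'k::field \<Rightarrow> 'k \<Rightarrow> ('k ^ 4) set" where
  "std r p q = {y. \<exists>s t. y = (if r then vector [s * p, s * q, t * p, t * q]
                                    else vector [p * s, p * t, q * s, q * t])}"

lemma std_F: "std False p q = sp2 (vector[p,0,q,0]) (vector[0,p,0,q])"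
proof -
  have e: "(vector[p * s, p * t, q * s, q * t] :: 'a^4) = s *s vector[p,0,q,0] + t *s vector[0,p,0,q]" for s t
    unfolding vec4_eq by (simp add: algebra_simps)
  show ?thesis unfolding std_def sp2_def by (simp add: e)
qed

lemma std_T: "std True p q = sp2 (vector[p,q,0,0]) (vector[0,0,p,q])"
proof -
  have e: "(vector[s * p, s * q, t * p, t * q] :: 'a^4) = s *s vector[p,q,0,0] + t *s vector[0,0,p,q]" for s t
    unfolding vec4_eq by (simp add: algebra_simps)
  show ?thesis unfolding std_def sp2_def by (simp add: e)
qed

lemma ind2_std_F: "(p, q) \<noteq> (0, 0) \<Longrightarrow> ind2 (vector[p,0,q,0]) (vector[0,p,0,q])"
  unfolding ind2_def by (auto simp: vec4_eq)

lemma ind2_std_T: "(p, q) \<noteq> (0, 0) \<Longrightarrow> ind2 (vector[p,q,0,0]) (vector[0,0,p,q])"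
  unfolding ind2_def by (auto simp: vec4_eq)

lemma ruling_of:
  assumes "invertible M" "(p, q) \<noteq> (0, 0)" "((*v) M) ` L = std r p q"
  shows "in_ruling r M L" "L \<subseteq> quadric M"
proof -
  have inj: "inj ((*v) M)" using assms(1) by (rule inj_matrix_vector_mult)
  have "L = {x. \<exists>s t. M *v x = (if r then vector [s * p, s * q, t * p, t * q]
                                    else vector [p * s, p * t, q * s, q * t])}" (is "L = ?R")
  proof
    show "L \<subseteq> ?R"
    proof
      fix x assume "x \<in> L"
      hence "M *v x \<in> std r p q" using assms(3) by blast
      thus "x \<in> ?R" unfolding std_def by blast
    qed
    show "?R \<subseteq> L"
    proof
      fix x assume "x \<in> ?R"
      hence "M *v x \<in> std r p q" unfolding std_def by blast
      then obtain x' where "x' \<in> L" "M *v x = M *v x'" using assms(3) by (metis imageE)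
      thus "x \<in> L" using inj by (metis injD)
    qed
  qed
  thus "in_ruling r M L" unfolding in_ruling_def using assms(2) by blast
  show "L \<subseteq> quadric M"
  proof
    fix x assume "x \<in> L"
    hence "M *v x \<in> std r p q" using assms(3) by blast
    then obtain s t where "M *v x = (if r then vector [s * p, s * q, t * p, t * q]
                                    else vector [p * s, p * t, q * s, q * t])" unfolding std_def by blast
    thus "x \<in> quadric M" unfolding quadric_def segre_form_def by (cases r) (simp_all add: algebra_simps)
  qed
qed

lemma final:
  fixes M :: "'a::field^4^4"
  assumes "invertible M"
    "\<forall>L\<in>A1. \<exists>p q. (p, q) \<noteq> (0, 0) \<and> ((*v) M) ` L = std r1 p q"
    "\<forall>L\<in>A2. \<exists>p q. (p, q) \<noteq> (0, 0) \<and> ((*v) M) ` L = std r2 p q"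
  shows "\<exists>M. smooth_quadric_matrix M
           \<and> (\<forall>L \<in> A1 \<union> A2. L \<subseteq> quadric M)
           \<and> (\<exists>r1. \<forall>L \<in> A1. in_ruling r1 M L)
           \<and> (\<exists>r2. \<forall>L \<in> A2. in_ruling r2 M L)"
proof -
  have h1: "smooth_quadric_matrix M" using assms(1) unfolding smooth_quadric_matrix_def .
  have h2: "L \<subseteq> quadric M \<and> in_ruling r1 M L" if "L \<in> A1" for L
  proof -
    have "\<exists>p q. (p, q) \<noteq> (0, 0) \<and> ((*v) M) ` L = std r1 p q" using assms(2) that by (rule bspec)
    then obtain p q where pq: "(p, q) \<noteq> (0, 0)" "((*v) M) ` L = std r1 p q" by meson
    show ?thesis using ruling_of[OF assms(1) pq] by simp
  qed
  have h3: "L \<subseteq> quadric M \<and> in_ruling r2 M L" if "L \<in> A2" for L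
  proof -
    have "\<exists>p q. (p, q) \<noteq> (0, 0) \<and> ((*v) M) ` L = std r2 p q" using assms(3) that by (rule bspec)
    then obtain p q where pq: "(p, q) \<noteq> (0, 0)" "((*v) M) ` L = std r2 p q" by meson
    show ?thesis using ruling_of[OF assms(1) pq] by simp
  qed
  show ?thesis
  proof (rule exI[of _ M], intro conjI)
    show "smooth_quadric_matrix M" by (rule h1)
    show "\<forall>L \<in> A1 \<union> A2. L \<subseteq> quadric M" using h2 h3 by (simp add: Ball_def) 
    show "\<exists>r1. \<forall>L \<in> A1. in_ruling r1 M L" using h2 by (intro exI[of _ r1]) (simp add: Ball_def)
    show "\<exists>r2. \<forall>L \<in> A2. in_ruling r2 M L" using h3 by (intro exI[of _ r2]) (simp add: Ball_def)
  qed
qed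

lemma basis_images:
  fixes e1 e2 e3 e4 :: "'a::field ^ 4"
  assumes "ind4 e1 e2 e3 e4"
  shows "\<exists>M::'a^4^4. invertible M \<and> ((*v) M) ` sp2 e1 e2 = std False 1 0
     \<and> ((*v) M) ` sp2 e3 e4 = std False 0 1 \<and> ((*v) M) ` sp2 e1 e3 = std True 1 0
     \<and> ((*v) M) ` sp2 e2 e4 = std True 0 1 \<and> ((*v) M) ` sp2 (e1 + e3) (e2 + e4) = std False 1 1"
proof -
  obtain M :: "'a^4^4" where inv: "invertible M" and
    H: "\<forall>c1 c2 c3 c4. M *v (c1 *s e1 + c2 *s e2 + c3 *s e3 + c4 *s e4) = vector [c1, c2, c3, c4]"
    using norm_basis[OF assms] by blast
  have m1: "M *v e1 = vector[1,0,0,0]" using H[rule_format, of 1 0 0 0] by simp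
  have m2: "M *v e2 = vector[0,1,0,0]" using H[rule_format, of 0 1 0 0] by simp
  have m3: "M *v e3 = vector[0,0,1,0]" using H[rule_format, of 0 0 1 0] by simp
  have m4: "M *v e4 = vector[0,0,0,1]" using H[rule_format, of 0 0 0 1] by simp
  have m13: "M *v (e1 + e3) = vector[1,0,1,0]" using H[rule_format, of 1 0 1 0] by simp
  have m24: "M *v (e2 + e4) = vector[0,1,0,1]" using H[rule_format, of 0 1 0 1] by simp
  show ?thesis
    by (rule exI[of _ M]) (simp add: inv image_sp2 m1 m2 m3 m4 m13 m24 std_F std_T)
qed

lemma ind3_extend:
  fixes x y z :: "'a::field ^ 4"
  assumes "\<forall>c1 c2 c3. c1 *s x + c2 *s y + c3 *s z = 0 \<longrightarrow> c1 = 0 \<and> c2 = 0 \<and> c3 = 0"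
  shows "\<exists>w. ind4 x y z w"
proof -
  have "\<not> (UNIV \<subseteq> vec.span {x, y, z})"
  proof
    assume "UNIV \<subseteq> vec.span {x, y, z}"
    hence "vec.dim (UNIV :: ('a^4) set) \<le> card {x, y, z}" by (intro vec.dim_le_card) auto
    also have "card {x, y, z} \<le> 3" by (simp add: card_insert_if)
    finally have "vec.dim (UNIV :: ('a^4) set) \<le> 3" .
    moreover have "vec.dim (UNIV :: ('a^4) set) = CARD(4)" by (rule vec_dim_card)
    ultimately show False by simp
  qed
  then obtain w where w: "w \<notin> vec.span {x, y, z}" by blast
  have "ind4 x y z w" unfolding ind4_def
  proof (intro allI impI)
    fix c1 c2 c3 c4 assume h: "c1 *s x + c2 *s y + c3 *s z + c4 *s w = 0"
    have "c4 = 0"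
    proof (rule ccontr)
      assume "c4 \<noteq> 0"
      have "c4 *s w = - (c1 *s x + c2 *s y + c3 *s z)" using h
        by (simp only: eq_neg_iff_add_eq_0 add.commute)
      hence "w = (- c1 / c4) *s x + (- c2 / c4) *s y + (- c3 / c4) *s z"
        using \<open>c4 \<noteq> 0\<close> by (simp add: vec4_eq field_simps) 
      moreover have "(- c1 / c4) *s x + (- c2 / c4) *s y + (- c3 / c4) *s z \<in> vec.span {x, y, z}"
        by (intro vec.span_add vec.span_scale vec.span_base) auto
      ultimately show False using w by simp
    qed
    thus "c1 = 0 \<and> c2 = 0 \<and> c3 = 0 \<and> c4 = 0" using h assms by simp
  qed
  thus ?thesis by blast
qed

lemma three_skew:
  fixes K1 K2 K3 :: "('a::field^4) set"
  assumes "is_line K1" "is_line K2" "is_line K3"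
    and d12: "lines_disjoint K1 K2" and d13: "lines_disjoint K1 K3" and d23: "lines_disjoint K2 K3"
  shows "\<exists>M::'a^4^4. invertible M \<and> ((*v) M) ` K1 = std False 1 0
     \<and> ((*v) M) ` K2 = std False 0 1 \<and> ((*v) M) ` K3 = std False 1 1"
proof -
  obtain u1 u2 where iu: "ind2 u1 u2" and K1: "K1 = sp2 u1 u2" using assms(1) unfolding is_line_sp2 by blast
  obtain v1 v2 where iv: "ind2 v1 v2" and K2: "K2 = sp2 v1 v2" using assms(2) unfolding is_line_sp2 by blast
  obtain w1 w2 where iw: "ind2 w1 w2" and K3: "K3 = sp2 w1 w2" using assms(3) unfolding is_line_sp2 by blast
  have "ind4 u1 u2 v1 v2" using disjoint_ind4 iu iv d12 K1 K2 unfolding lines_disjoint_def by blast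
  then obtain M0 :: "'a^4^4" where
    S: "\<forall>x. \<exists>c1 c2 c3 c4. x = c1 *s u1 + c2 *s u2 + c3 *s v1 + c4 *s v2"
    using norm_basis by blast
  obtain a1 b1 c1 d1 where "w1 = a1 *s u1 + b1 *s u2 + c1 *s v1 + d1 *s v2" using S by blast
  hence w1: "w1 = (a1 *s u1 + b1 *s u2) + (c1 *s v1 + d1 *s v2)" by (simp add: add.assoc)
  obtain a2 b2 c2 d2 where "w2 = a2 *s u1 + b2 *s u2 + c2 *s v1 + d2 *s v2" using S by blast
  hence w2: "w2 = (a2 *s u1 + b2 *s u2) + (c2 *s v1 + d2 *s v2)" by (simp add: add.assoc)
  define x1 where "x1 = a1 *s u1 + b1 *s u2"
  define x2 where "x2 = a2 *s u1 + b2 *s u2"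
  define z1 where "z1 = c1 *s v1 + d1 *s v2"
  define z2 where "z2 = c2 *s v1 + d2 *s v2"
  have x1K: "x1 \<in> K1" "x2 \<in> K1" unfolding K1 x1_def x2_def mem_sp2 by blast+
  have z1K: "z1 \<in> K2" "z2 \<in> K2" unfolding K2 z1_def z2_def mem_sp2 by blast+
  have ix: "ind2 x1 x2" unfolding ind2_def
  proof (intro allI impI)
    fix \<alpha> \<beta> assume h: "\<alpha> *s x1 + \<beta> *s x2 = 0"
    have e: "\<alpha> *s w1 + \<beta> *s w2 = (\<alpha> * c1 + \<beta> * c2) *s v1 + (\<alpha> * d1 + \<beta> * d2) *s v2"
      using h unfolding w1 w2 x1_def x2_def by (simp add: vec4_eq algebra_simps)
    have "\<alpha> *s w1 + \<beta> *s w2 \<in> K2" unfolding e K2 mem_sp2 by blast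
    moreover have "\<alpha> *s w1 + \<beta> *s w2 \<in> K3" unfolding K3 mem_sp2 by blast
    ultimately have "\<alpha> *s w1 + \<beta> *s w2 \<in> K2 \<inter> K3" by simp
    hence "\<alpha> *s w1 + \<beta> *s w2 = 0" using d23 unfolding lines_disjoint_def by blast
    thus "\<alpha> = 0 \<and> \<beta> = 0" using iw unfolding ind2_def by blast
  qed
  have iz: "ind2 z1 z2" unfolding ind2_def
  proof (intro allI impI)
    fix \<alpha> \<beta> assume h: "\<alpha> *s z1 + \<beta> *s z2 = 0"
    have e: "\<alpha> *s w1 + \<beta> *s w2 = (\<alpha> * a1 + \<beta> * a2) *s u1 + (\<alpha> * b1 + \<beta> * b2) *s u2"
      using h unfolding w1 w2 z1_def z2_def by (simp add: vec4_eq algebra_simps)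
    have "\<alpha> *s w1 + \<beta> *s w2 \<in> K1" unfolding e K1 mem_sp2 by blast
    moreover have "\<alpha> *s w1 + \<beta> *s w2 \<in> K3" unfolding K3 mem_sp2 by blast
    ultimately have "\<alpha> *s w1 + \<beta> *s w2 \<in> K1 \<inter> K3" by simp
    hence "\<alpha> *s w1 + \<beta> *s w2 = 0" using d13 unfolding lines_disjoint_def by blast
    thus "\<alpha> = 0 \<and> \<beta> = 0" using iw unfolding ind2_def by blast
  qed
  have K1': "K1 = sp2 x1 x2" using sp2_two_points[OF iu _ _ ix] x1K K1 by simp
  have K2': "K2 = sp2 z1 z2" using sp2_two_points[OF iv _ _ iz] z1K K2 by simp
  have K3': "K3 = sp2 (x1 + z1) (x2 + z2)" using K3 w1 w2 x1_def x2_def z1_def z2_def by simp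
  have "ind4 x1 x2 z1 z2" using disjoint_ind4[OF ix iz] d12 K1' K2' unfolding lines_disjoint_def by simp
  from basis_images[OF this] obtain M :: "'a^4^4" where "invertible M"
    "((*v) M) ` sp2 x1 x2 = std False 1 0" "((*v) M) ` sp2 z1 z2 = std False 0 1"
    "((*v) M) ` sp2 (x1 + z1) (x2 + z2) = std False 1 1" by meson
  thus ?thesis unfolding K1' K2' K3' by (intro exI[of _ M]) simp
qed

lemma meets_std_F:
  fixes N :: "('a::field^4) set"
  assumes "is_line N" "lines_meet N (std False 1 0)" "lines_meet N (std False 0 1)"
    "lines_meet N (std False 1 1)"
  shows "\<exists>p q. (p, q) \<noteq> (0, 0) \<and> N = std True p q"
proof -
  obtain n1 n2 where i_n: "ind2 n1 n2" and N: "N = sp2 n1 n2" using assms(1) unfolding is_line_sp2 by blast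
  obtain u s1 t1 where u: "u \<noteq> 0" "u \<in> N" "u = (vector [s1, t1, 0, 0] :: 'a^4)"
    using assms(2) unfolding lines_meet_def std_def by auto
  obtain v s2 t2 where v: "v \<noteq> 0" "v \<in> N" "v = (vector [0, 0, s2, t2] :: 'a^4)"
    using assms(3) unfolding lines_meet_def std_def by auto
  obtain w s t where w: "w \<noteq> 0" "w \<in> N" "w = (vector [s, t, s, t] :: 'a^4)"
    using assms(4) unfolding lines_meet_def std_def by auto
  have st1: "s1 \<noteq> 0 \<or> t1 \<noteq> 0" using u by (auto simp: vec4_eq)
  have st2: "s2 \<noteq> 0 \<or> t2 \<noteq> 0" using v by (auto simp: vec4_eq)
  have st: "s \<noteq> 0 \<or> t \<noteq> 0" using w by (auto simp: vec4_eq)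
  have iuv: "ind2 u v" unfolding ind2_def
  proof (intro allI impI)
    fix a b assume "a *s u + b *s v = 0"
    hence "a * s1 = 0" "a * t1 = 0" "b * s2 = 0" "b * t2 = 0" using u v by (simp_all add: vec4_eq)
    thus "a = 0 \<and> b = 0" using st1 st2 by auto
  qed
  have N': "N = sp2 u v" using sp2_two_points[OF i_n _ _ iuv] u v N by simp
  obtain \<alpha> \<beta> where wab: "w = \<alpha> *s u + \<beta> *s v" using w(2) unfolding N' mem_sp2 by blast
  have "w$1 = (\<alpha> *s u + \<beta> *s v)$1" "w$2 = (\<alpha> *s u + \<beta> *s v)$2"
    "w$3 = (\<alpha> *s u + \<beta> *s v)$3" "w$4 = (\<alpha> *s u + \<beta> *s v)$4" using wab by simp_all
  hence e: "s = \<alpha> * s1" "t = \<alpha> * t1" "s = \<beta> * s2" "t = \<beta> * t2"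
    unfolding u(3) v(3) w(3) by simp_all
  have "\<alpha> \<noteq> 0" using e(1,2) st by auto
  have "\<beta> \<noteq> 0" using e(3,4) st by auto
  have pq: "(s, t) \<noteq> (0, 0)" using st by auto
  have "u = (1 / \<alpha>) *s vector[s,t,0,0] + 0 *s vector[0,0,s,t]"
    using u e \<open>\<alpha> \<noteq> 0\<close> by (simp add: vec4_eq field_simps)
  hence uin: "u \<in> sp2 (vector[s,t,0,0]) (vector[0,0,s,t])" unfolding mem_sp2 by blast
  have "v = 0 *s vector[s,t,0,0] + (1 / \<beta>) *s vector[0,0,s,t]"
    using v e \<open>\<beta> \<noteq> 0\<close> by (simp add: vec4_eq field_simps)
  hence vin: "v \<in> sp2 (vector[s,t,0,0]) (vector[0,0,s,t])" unfolding mem_sp2 by blast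
  have "std True s t = N" unfolding std_T N' by (rule sp2_two_points[OF ind2_std_T[OF pq] uin vin iuv])
  thus ?thesis using pq by metis
qed

lemma std_T_det:
  fixes p1 q1 p2 q2 :: "'a::field"
  assumes "lines_disjoint (std True p1 q1) (std True p2 q2)" "(p1, q1) \<noteq> (0, 0)" "(p2, q2) \<noteq> (0, 0)"
  shows "p1 * q2 - q1 * p2 \<noteq> 0"
proof
  assume D: "p1 * q2 - q1 * p2 = 0"
  define x :: "'a^4" where "x = vector [p1, q1, 0, 0]"
  have "x = vector [1 * p1, 1 * q1, 0 * p1, 0 * q1]" unfolding x_def by simp
  hence x1: "x \<in> std True p1 q1" unfolding std_def by (simp only: if_True) blast
  obtain lam where l: "p1 = lam * p2" "q1 = lam * q2"
  proof (cases "p2 = 0")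
    case True
    hence "q2 \<noteq> 0" using assms(3) by simp
    hence "p1 = 0" using D True by simp
    show ?thesis by (rule that[of "q1 / q2"]) (simp_all add: True \<open>p1 = 0\<close> \<open>q2 \<noteq> 0\<close>)
  next
    case False
    have "q1 = p1 / p2 * q2" using D False by (simp add: field_simps)
    show ?thesis by (rule that[of "p1 / p2"]) (simp_all add: False \<open>q1 = p1 / p2 * q2\<close>)
  qed
  have "x = vector [lam * p2, lam * q2, 0 * p2, 0 * q2]" unfolding x_def using l by simp
  hence x2: "x \<in> std True p2 q2" unfolding std_def by (simp only: if_True) blast
  have "x \<noteq> 0" using assms(2) unfolding x_def by (auto simp: vec4_eq)
  with x1 x2 assms(1) show False unfolding lines_disjoint_def by blast
qed

lemma std_T_mem: "x \<in> std True p q \<longleftrightarrow> (\<exists>s t. x = vector [s * p, s * q, t * p, t * q])"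
  unfolding std_def by simp

lemma meets_std_T3:
  fixes N :: "('a::field^4) set"
  assumes "is_line N" and nz: "(p1, q1) \<noteq> (0, 0)" "(p2, q2) \<noteq> (0, 0)" "(p3, q3) \<noteq> (0, 0)"
    and m: "lines_meet N (std True p1 q1)" "lines_meet N (std True p2 q2)" "lines_meet N (std True p3 q3)"
    and d: "lines_disjoint (std True p1 q1) (std True p2 q2)" "lines_disjoint (std True p1 q1) (std True p3 q3)"
      "lines_disjoint (std True p2 q2) (std True p3 q3)"
  shows "\<exists>p q. (p, q) \<noteq> (0, 0) \<and> N = std False p q"
proof -
  obtain n1 n2 where i_n: "ind2 n1 n2" and N: "N = sp2 n1 n2" using assms(1) unfolding is_line_sp2 by blast
  obtain u1 where u1: "u1 \<noteq> 0" "u1 \<in> N" "u1 \<in> std True p1 q1" using m(1) unfolding lines_meet_def by blast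
  obtain s1 t1 where u1e: "u1 = vector [s1 * p1, s1 * q1, t1 * p1, t1 * q1]" using u1(3) unfolding std_T_mem by blast
  obtain u2 where u2: "u2 \<noteq> 0" "u2 \<in> N" "u2 \<in> std True p2 q2" using m(2) unfolding lines_meet_def by blast
  obtain s2 t2 where u2e: "u2 = vector [s2 * p2, s2 * q2, t2 * p2, t2 * q2]" using u2(3) unfolding std_T_mem by blast
  obtain u3 where u3: "u3 \<noteq> 0" "u3 \<in> N" "u3 \<in> std True p3 q3" using m(3) unfolding lines_meet_def by blast
  obtain s3 t3 where u3e: "u3 = vector [s3 * p3, s3 * q3, t3 * p3, t3 * q3]" using u3(3) unfolding std_T_mem by blast
  have i12: "ind2 u1 u2"
    by (rule meet_points_ind2[OF u1(3)[unfolded std_T] u2(3)[unfolded std_T] _ u1(1) u2(1)])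
       (use d(1) in \<open>simp add: lines_disjoint_def std_T\<close>)
  have N': "N = sp2 u1 u2" using sp2_two_points[OF i_n _ _ i12] u1 u2 N by simp
  obtain \<alpha> \<beta> where u3ab: "u3 = \<alpha> *s u1 + \<beta> *s u2" using u3(2) unfolding N' mem_sp2 by blast
  have "u3$1 = (\<alpha> *s u1 + \<beta> *s u2)$1" "u3$2 = (\<alpha> *s u1 + \<beta> *s u2)$2"
    "u3$3 = (\<alpha> *s u1 + \<beta> *s u2)$3" "u3$4 = (\<alpha> *s u1 + \<beta> *s u2)$4" using u3ab by simp_all
  hence c: "s3 * p3 = \<alpha> * (s1 * p1) + \<beta> * (s2 * p2)" "s3 * q3 = \<alpha> * (s1 * q1) + \<beta> * (s2 * q2)"
    "t3 * p3 = \<alpha> * (t1 * p1) + \<beta> * (t2 * p2)" "t3 * q3 = \<alpha> * (t1 * q1) + \<beta> * (t2 * q2)"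
    unfolding u1e u2e u3e by simp_all
  have "(\<alpha> * (s1 * p1) + \<beta> * (s2 * p2)) * (\<alpha> * (t1 * q1) + \<beta> * (t2 * q2))
      - (\<alpha> * (s1 * q1) + \<beta> * (s2 * q2)) * (\<alpha> * (t1 * p1) + \<beta> * (t2 * p2)) = 0"
    unfolding c[symmetric] by (simp add: algebra_simps)
  moreover have "(\<alpha> * (s1 * p1) + \<beta> * (s2 * p2)) * (\<alpha> * (t1 * q1) + \<beta> * (t2 * q2))
      - (\<alpha> * (s1 * q1) + \<beta> * (s2 * q2)) * (\<alpha> * (t1 * p1) + \<beta> * (t2 * p2))
      = \<alpha> * \<beta> * ((s1 * t2 - t1 * s2) * (p1 * q2 - q1 * p2))" by algebra
  ultimately have prod: "\<alpha> * \<beta> * ((s1 * t2 - t1 * s2) * (p1 * q2 - q1 * p2)) = 0" by simp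
  have "\<alpha> \<noteq> 0"
  proof
    assume "\<alpha> = 0"
    hence "u3 = \<beta> *s u2" using u3ab by simp
    hence "u3 \<in> std True p2 q2" using u2(3) unfolding std_T by (simp add: sp2_scale)
    thus False using u3 d(3) unfolding lines_disjoint_def by blast
  qed
  moreover have "\<beta> \<noteq> 0"
  proof
    assume "\<beta> = 0"
    hence "u3 = \<alpha> *s u1" using u3ab by simp
    hence "u3 \<in> std True p1 q1" using u1(3) unfolding std_T by (simp add: sp2_scale)
    thus False using u3 d(2) unfolding lines_disjoint_def by blast
  qed
  moreover have "p1 * q2 - q1 * p2 \<noteq> 0" by (rule std_T_det[OF d(1) nz(1,2)])
  ultimately have st: "s1 * t2 = t1 * s2" using prod by simp
  have st1: "(s1, t1) \<noteq> (0, 0)" using u1(1) unfolding u1e by (auto simp: vec4_eq)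
  have "u1 = p1 *s vector[s1,0,t1,0] + q1 *s vector[0,s1,0,t1]" unfolding u1e by (simp add: vec4_eq algebra_simps)
  hence in1: "u1 \<in> sp2 (vector[s1,0,t1,0]) (vector[0,s1,0,t1])" unfolding mem_sp2 by blast
  obtain lam where l: "s2 = lam * s1" "t2 = lam * t1"
  proof (cases "s1 = 0")
    case True
    hence "t1 \<noteq> 0" using st1 by simp
    hence "s2 = 0" using st True by simp
    show ?thesis by (rule that[of "t2 / t1"]) (simp_all add: True \<open>s2 = 0\<close> \<open>t1 \<noteq> 0\<close>)
  next
    case False
    have "t2 = s2 / s1 * t1" using st False by (simp add: field_simps)
    show ?thesis by (rule that[of "s2 / s1"]) (simp_all add: False \<open>t2 = s2 / s1 * t1\<close>)
  qed
  have "u2 = (lam * p2) *s vector[s1,0,t1,0] + (lam * q2) *s vector[0,s1,0,t1]"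
    unfolding u2e l by (simp add: vec4_eq algebra_simps)
  hence in2: "u2 \<in> sp2 (vector[s1,0,t1,0]) (vector[0,s1,0,t1])" unfolding mem_sp2 by blast
  have "std False s1 t1 = N" unfolding std_F N' by (rule sp2_two_points[OF ind2_std_F[OF st1] in1 in2 i12])
  thus ?thesis using st1 by metis
qed

lemma ind4_swap: "ind4 a b c d \<Longrightarrow> ind4 a c b d"
  unfolding ind4_def
proof (intro allI impI)
  fix c1 c2 c3 c4
  assume H: "\<forall>c1 c2 c3 c4. c1 *s a + c2 *s b + c3 *s c + c4 *s d = 0 \<longrightarrow> c1 = 0 \<and> c2 = 0 \<and> c3 = 0 \<and> c4 = 0"
    and h: "c1 *s a + c2 *s c + c3 *s b + c4 *s d = 0"
  have "c1 *s a + c3 *s b + c2 *s c + c4 *s d = 0" using h by (simp add: ac_simps)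
  hence "c1 = 0 \<and> c3 = 0 \<and> c2 = 0 \<and> c4 = 0" using H by blast
  thus "c1 = 0 \<and> c2 = 0 \<and> c3 = 0 \<and> c4 = 0" by blast
qed

lemma meet_point:
  assumes "lines_meet L N"
  obtains x where "x \<noteq> 0" "x \<in> L" "x \<in> N"
  using assms unfolding lines_meet_def by blast

lemma case11:
  fixes L N :: "('a::field^4) set"
  assumes "is_line L" "is_line N" "lines_meet L N" "L \<noteq> N"
  shows "\<exists>M::'a^4^4. invertible M \<and> ((*v) M) ` L = std False 1 0 \<and> ((*v) M) ` N = std True 1 0"
proof -
  obtain l1 l2 where il: "ind2 l1 l2" and L: "L = sp2 l1 l2" using assms(1) unfolding is_line_sp2 by blast
  obtain n1 n2 where i_n: "ind2 n1 n2" and N: "N = sp2 n1 n2" using assms(2) unfolding is_line_sp2 by blast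
  obtain x where x: "x \<noteq> 0" "x \<in> L" "x \<in> N" using assms(3) by (rule meet_point)
  obtain y where ixy: "ind2 x y" and L': "L = sp2 x y" using sp2_exchange[OF il _ x(1)] x(2) L by blast
  obtain z where ixz: "ind2 x z" and N': "N = sp2 x z" using sp2_exchange[OF i_n _ x(1)] x(3) N by blast
  have i3: "\<forall>c1 c2 c3. c1 *s x + c2 *s y + c3 *s z = 0 \<longrightarrow> c1 = 0 \<and> c2 = 0 \<and> c3 = 0"
  proof (intro allI impI)
    fix c1 c2 c3 assume h: "c1 *s x + c2 *s y + c3 *s z = 0"
    have "c3 = 0"
    proof (rule ccontr)
      assume c3: "c3 \<noteq> 0"
      have e: "c3 *s z = (- c1) *s x + (- c2) *s y"
      proof -
        have "c3 *s z = - (c1 *s x + c2 *s y)" using h by (simp only: eq_neg_iff_add_eq_0 add.commute)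
        thus ?thesis by (simp add: vec4_eq)
      qed
      have "z = (1 / c3) *s (c3 *s z)" using c3 by simp
      also have "\<dots> = (- c1 / c3) *s x + (- c2 / c3) *s y" unfolding e by (simp add: vec4_eq algebra_simps)
      finally have "z \<in> sp2 x y" unfolding mem_sp2 by blast
      hence "sp2 x y = sp2 x z" by (rule sp2_two_points[OF ixy sp2_gen(1) _ ixz])
      thus False using assms(4) L' N' by simp
    qed
    hence "c1 *s x + c2 *s y = 0" using h by simp
    hence "c1 = 0 \<and> c2 = 0" using ixy unfolding ind2_def by blast
    thus "c1 = 0 \<and> c2 = 0 \<and> c3 = 0" using \<open>c3 = 0\<close> by simp
  qed
  obtain w where "ind4 x y z w" using ind3_extend[OF i3] by blast
  from basis_images[OF this] obtain M :: "'a^4^4" where "invertible M"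
    "((*v) M) ` sp2 x y = std False 1 0" "((*v) M) ` sp2 x z = std True 1 0" by meson
  thus ?thesis unfolding L' N' by (intro exI[of _ M]) simp
qed

lemma case12:
  fixes L N1 N2 :: "('a::field^4) set"
  assumes "is_line L" "is_line N1" "is_line N2" "lines_meet L N1" "lines_meet L N2" "lines_disjoint N1 N2"
  shows "\<exists>M::'a^4^4. invertible M \<and> ((*v) M) ` L = std False 1 0 \<and> ((*v) M) ` N1 = std True 1 0
     \<and> ((*v) M) ` N2 = std True 0 1"
proof -
  obtain l1 l2 where il: "ind2 l1 l2" and L: "L = sp2 l1 l2" using assms(1) unfolding is_line_sp2 by blast
  obtain a1 a2 where ia: "ind2 a1 a2" and N1: "N1 = sp2 a1 a2" using assms(2) unfolding is_line_sp2 by blast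
  obtain b1 b2 where ib: "ind2 b1 b2" and N2: "N2 = sp2 b1 b2" using assms(3) unfolding is_line_sp2 by blast
  obtain x1 where x1: "x1 \<noteq> 0" "x1 \<in> L" "x1 \<in> N1" using assms(4) by (rule meet_point)
  obtain x2 where x2: "x2 \<noteq> 0" "x2 \<in> L" "x2 \<in> N2" using assms(5) by (rule meet_point)
  have i12: "ind2 x1 x2"
    by (rule meet_points_ind2[of x1 a1 a2 x2 b1 b2]) (use x1 x2 N1 N2 assms(6) in \<open>simp_all add: lines_disjoint_def\<close>)
  have L': "L = sp2 x1 x2" using sp2_two_points[OF il _ _ i12] x1 x2 L by simp
  obtain w3 where i3: "ind2 x1 w3" and N1': "N1 = sp2 x1 w3" using sp2_exchange[OF ia _ x1(1)] x1(3) N1 by blast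
  obtain w4 where i4: "ind2 x2 w4" and N2': "N2 = sp2 x2 w4" using sp2_exchange[OF ib _ x2(1)] x2(3) N2 by blast
  have "ind4 x1 w3 x2 w4" using disjoint_ind4[OF i3 i4] assms(6) N1' N2' unfolding lines_disjoint_def by simp
  hence "ind4 x1 x2 w3 w4" by (rule ind4_swap)
  from basis_images[OF this] obtain M :: "'a^4^4" where "invertible M"
    "((*v) M) ` sp2 x1 x2 = std False 1 0" "((*v) M) ` sp2 x1 w3 = std True 1 0"
    "((*v) M) ` sp2 x2 w4 = std True 0 1" by meson
  thus ?thesis unfolding L' N1' N2' by (intro exI[of _ M]) simp
qed

lemma case22:
  fixes L1 L2 N1 N2 :: "('a::field^4) set"
  assumes "is_line L1" "is_line L2" "is_line N1" "is_line N2"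
    "lines_meet L1 N1" "lines_meet L1 N2" "lines_meet L2 N1" "lines_meet L2 N2"
    "lines_disjoint L1 L2" "lines_disjoint N1 N2"
  shows "\<exists>M::'a^4^4. invertible M \<and> ((*v) M) ` L1 = std False 1 0 \<and> ((*v) M) ` L2 = std False 0 1
     \<and> ((*v) M) ` N1 = std True 1 0 \<and> ((*v) M) ` N2 = std True 0 1"
proof -
  obtain l1 l2 where il: "ind2 l1 l2" and L1: "L1 = sp2 l1 l2" using assms(1) unfolding is_line_sp2 by blast
  obtain m1 m2 where im: "ind2 m1 m2" and L2: "L2 = sp2 m1 m2" using assms(2) unfolding is_line_sp2 by blast
  obtain a1 a2 where ia: "ind2 a1 a2" and N1: "N1 = sp2 a1 a2" using assms(3) unfolding is_line_sp2 by blast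
  obtain b1 b2 where ib: "ind2 b1 b2" and N2: "N2 = sp2 b1 b2" using assms(4) unfolding is_line_sp2 by blast
  obtain x11 where x11: "x11 \<noteq> 0" "x11 \<in> L1" "x11 \<in> N1" using assms(5) by (rule meet_point)
  obtain x12 where x12: "x12 \<noteq> 0" "x12 \<in> L1" "x12 \<in> N2" using assms(6) by (rule meet_point)
  obtain x21 where x21: "x21 \<noteq> 0" "x21 \<in> L2" "x21 \<in> N1" using assms(7) by (rule meet_point)
  obtain x22 where x22: "x22 \<noteq> 0" "x22 \<in> L2" "x22 \<in> N2" using assms(8) by (rule meet_point)
  have ia1: "ind2 x11 x12"
    by (rule meet_points_ind2[of x11 a1 a2 x12 b1 b2]) (use x11 x12 N1 N2 assms(10) in \<open>simp_all add: lines_disjoint_def\<close>)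
  have ia2: "ind2 x21 x22"
    by (rule meet_points_ind2[of x21 a1 a2 x22 b1 b2]) (use x21 x22 N1 N2 assms(10) in \<open>simp_all add: lines_disjoint_def\<close>)
  have ib1: "ind2 x11 x21"
    by (rule meet_points_ind2[of x11 l1 l2 x21 m1 m2]) (use x11 x21 L1 L2 assms(9) in \<open>simp_all add: lines_disjoint_def\<close>)
  have ib2: "ind2 x12 x22"
    by (rule meet_points_ind2[of x12 l1 l2 x22 m1 m2]) (use x12 x22 L1 L2 assms(9) in \<open>simp_all add: lines_disjoint_def\<close>)
  have L1': "L1 = sp2 x11 x12" using sp2_two_points[OF il _ _ ia1] x11 x12 L1 by simp
  have L2': "L2 = sp2 x21 x22" using sp2_two_points[OF im _ _ ia2] x21 x22 L2 by simp
  have N1': "N1 = sp2 x11 x21" using sp2_two_points[OF ia _ _ ib1] x11 x21 N1 by simp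
  have N2': "N2 = sp2 x12 x22" using sp2_two_points[OF ib _ _ ib2] x12 x22 N2 by simp
  have "ind4 x11 x12 x21 x22" using disjoint_ind4[OF ia1 ia2] assms(9) L1' L2' unfolding lines_disjoint_def by simp
  from basis_images[OF this] obtain M :: "'a^4^4" where "invertible M"
    "((*v) M) ` sp2 x11 x12 = std False 1 0" "((*v) M) ` sp2 x21 x22 = std False 0 1"
    "((*v) M) ` sp2 x11 x21 = std True 1 0" "((*v) M) ` sp2 x12 x22 = std True 0 1" by meson
  thus ?thesis unfolding L1' L2' N1' N2' by (intro exI[of _ M]) simp
qed

lemma ex_std: "(p, q) \<noteq> (0, 0) \<Longrightarrow> X = std r p q \<Longrightarrow> \<exists>p q. (p, q) \<noteq> (0, 0) \<and> X = std r p q"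
  by (rule exI, rule exI, rule conjI)

lemma lines_meet_sym: "lines_meet L N \<Longrightarrow> lines_meet N L"
  unfolding lines_meet_def by blast

lemma three_of:
  assumes "3 \<le> card A"
  obtains K1 K2 K3 where "K1 \<in> A" "K2 \<in> A" "K3 \<in> A" "K1 \<noteq> K2" "K1 \<noteq> K3" "K2 \<noteq> K3"
proof -
  obtain B where "B \<subseteq> A" "card B = 3" using obtain_subset_with_card_n[OF assms] by metis
  then obtain x y z where "B = {x, y, z}" "x \<noteq> y" "y \<noteq> z" "x \<noteq> z" unfolding card_3_iff by blast
  thus ?thesis using that \<open>B \<subseteq> A\<close> by auto
qed

theorem lemma2p3:
  fixes A1 A2 :: "('k::field ^ 4) set set" and a b :: nat
  assumes "finite A1" and "finite A2"
    and "\<forall>L \<in> A1 \<union> A2. is_line L"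
    and "A1 \<inter> A2 = {}"
    and "card A1 = a" and "card A2 = b"
    and "\<forall>L \<in> A1. \<forall>L' \<in> A2. lines_meet L L'"
    and "\<forall>L \<in> A1. \<forall>L' \<in> A1. L \<noteq> L' \<longrightarrow> lines_disjoint L L'"
    and "\<forall>L \<in> A2. \<forall>L' \<in> A2. L \<noteq> L' \<longrightarrow> lines_disjoint L L'"
    and "a \<ge> 1" and "b \<ge> 1"
    and "(3 \<le> a \<and> a \<le> b) \<or> (a \<le> b \<and> b \<le> 3)"
  shows "\<exists>M. smooth_quadric_matrix M
           \<and> (\<forall>L \<in> A1 \<union> A2. L \<subseteq> quadric M)
           \<and> (\<exists>r1. \<forall>L \<in> A1. in_ruling r1 M L)
           \<and> (\<exists>r2. \<forall>L \<in> A2. in_ruling r2 M L)"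
proof -
  have lin: "\<And>L. L \<in> A1 \<Longrightarrow> is_line L" "\<And>L. L \<in> A2 \<Longrightarrow> is_line L" using assms(3) by auto
  have mt: "\<And>L N. L \<in> A1 \<Longrightarrow> N \<in> A2 \<Longrightarrow> lines_meet L N" using assms(7) by auto
  have dj1: "\<And>L L'. L \<in> A1 \<Longrightarrow> L' \<in> A1 \<Longrightarrow> L \<noteq> L' \<Longrightarrow> lines_disjoint L L'" using assms(8) by auto
  have dj2: "\<And>L L'. L \<in> A2 \<Longrightarrow> L' \<in> A2 \<Longrightarrow> L \<noteq> L' \<Longrightarrow> lines_disjoint L L'" using assms(9) by auto
  consider "3 \<le> a" | "b = 3" | "a = 1 \<and> b = 1" | "a = 1 \<and> b = 2" | "a = 2 \<and> b = 2"
    using assms(10,11,12) by linarith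
  then show ?thesis
  proof cases
    case 1
    have "3 \<le> card A1" using 1 assms(5) by simp
    then obtain K1 K2 K3 where K: "K1 \<in> A1" "K2 \<in> A1" "K3 \<in> A1" "K1 \<noteq> K2" "K1 \<noteq> K3" "K2 \<noteq> K3"
      by (rule three_of)
    obtain M :: "'k^4^4" where M: "invertible M" "((*v) M) ` K1 = std False 1 0"
       "((*v) M) ` K2 = std False 0 1" "((*v) M) ` K3 = std False 1 1"
      using three_skew[OF lin(1)[OF K(1)] lin(1)[OF K(2)] lin(1)[OF K(3)] dj1[OF K(1,2,4)] dj1[OF K(1,3,5)] dj1[OF K(2,3,6)]]
      by meson
    have A2img: "\<exists>p q. (p, q) \<noteq> (0, 0) \<and> ((*v) M) ` N = std True p q" if "N \<in> A2" for N
    proof (rule meets_std_F)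
      show "is_line (((*v) M) ` N)" by (rule is_line_image[OF M(1) lin(2)[OF that]])
      show "lines_meet (((*v) M) ` N) (std False 1 0)"
        unfolding M(2)[symmetric] by (rule meet_image[OF M(1) lines_meet_sym[OF mt[OF K(1) that]]])
      show "lines_meet (((*v) M) ` N) (std False 0 1)"
        unfolding M(3)[symmetric] by (rule meet_image[OF M(1) lines_meet_sym[OF mt[OF K(2) that]]])
      show "lines_meet (((*v) M) ` N) (std False 1 1)"
        unfolding M(4)[symmetric] by (rule meet_image[OF M(1) lines_meet_sym[OF mt[OF K(3) that]]])
    qed
    have "3 \<le> card A2" using 1 assms(5,6,12) by linarith
    then obtain N1 N2 N3 where N: "N1 \<in> A2" "N2 \<in> A2" "N3 \<in> A2" "N1 \<noteq> N2" "N1 \<noteq> N3" "N2 \<noteq> N3"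
      by (rule three_of)
    obtain p1 q1 where pq1: "(p1, q1) \<noteq> (0, 0)" "((*v) M) ` N1 = std True p1 q1" using A2img[OF N(1)] by meson
    obtain p2 q2 where pq2: "(p2, q2) \<noteq> (0, 0)" "((*v) M) ` N2 = std True p2 q2" using A2img[OF N(2)] by meson
    obtain p3 q3 where pq3: "(p3, q3) \<noteq> (0, 0)" "((*v) M) ` N3 = std True p3 q3" using A2img[OF N(3)] by meson
    have A1img: "\<exists>p q. (p, q) \<noteq> (0, 0) \<and> ((*v) M) ` L = std False p q" if "L \<in> A1" for L
    proof (rule meets_std_T3[OF _ pq1(1) pq2(1) pq3(1)])
      show "is_line (((*v) M) ` L)" by (rule is_line_image[OF M(1) lin(1)[OF that]])
      show "lines_meet (((*v) M) ` L) (std True p1 q1)"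
        unfolding pq1(2)[symmetric] by (rule meet_image[OF M(1) mt[OF that N(1)]])
      show "lines_meet (((*v) M) ` L) (std True p2 q2)"
        unfolding pq2(2)[symmetric] by (rule meet_image[OF M(1) mt[OF that N(2)]])
      show "lines_meet (((*v) M) ` L) (std True p3 q3)"
        unfolding pq3(2)[symmetric] by (rule meet_image[OF M(1) mt[OF that N(3)]])
      show "lines_disjoint (std True p1 q1) (std True p2 q2)"
        unfolding pq1(2)[symmetric] pq2(2)[symmetric] by (rule disj_image[OF M(1) dj2[OF N(1,2,4)]])
      show "lines_disjoint (std True p1 q1) (std True p3 q3)"
        unfolding pq1(2)[symmetric] pq3(2)[symmetric] by (rule disj_image[OF M(1) dj2[OF N(1,3,5)]])
      show "lines_disjoint (std True p2 q2) (std True p3 q3)"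
        unfolding pq2(2)[symmetric] pq3(2)[symmetric] by (rule disj_image[OF M(1) dj2[OF N(2,3,6)]])
    qed
    have h1: "\<forall>L\<in>A1. \<exists>p q. (p, q) \<noteq> (0, 0) \<and> ((*v) M) ` L = std False p q"
      by (intro ballI) (rule A1img)
    have h2: "\<forall>L\<in>A2. \<exists>p q. (p, q) \<noteq> (0, 0) \<and> ((*v) M) ` L = std True p q"
      by (intro ballI) (rule A2img)
    show ?thesis by (rule final[OF M(1) h1 h2])
  next
    case 2
    have "card A2 = 3" using assms(6) 2 by simp
    then obtain K1 K2 K3 where A2: "A2 = {K1, K2, K3}" and K: "K1 \<noteq> K2" "K2 \<noteq> K3" "K1 \<noteq> K3"
      unfolding card_3_iff by blast
    have Kin: "K1 \<in> A2" "K2 \<in> A2" "K3 \<in> A2" unfolding A2 by simp_all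
    obtain M :: "'k^4^4" where M: "invertible M" "((*v) M) ` K1 = std False 1 0"
       "((*v) M) ` K2 = std False 0 1" "((*v) M) ` K3 = std False 1 1"
      using three_skew[OF lin(2)[OF Kin(1)] lin(2)[OF Kin(2)] lin(2)[OF Kin(3)] dj2[OF Kin(1,2) K(1)] dj2[OF Kin(1,3) K(3)] dj2[OF Kin(2,3) K(2)]]
      by meson
    have A1img: "\<exists>p q. (p, q) \<noteq> (0, 0) \<and> ((*v) M) ` N = std True p q" if "N \<in> A1" for N
    proof (rule meets_std_F)
      show "is_line (((*v) M) ` N)" by (rule is_line_image[OF M(1) lin(1)[OF that]])
      show "lines_meet (((*v) M) ` N) (std False 1 0)"
        unfolding M(2)[symmetric] by (rule meet_image[OF M(1) mt[OF that Kin(1)]])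
      show "lines_meet (((*v) M) ` N) (std False 0 1)"
        unfolding M(3)[symmetric] by (rule meet_image[OF M(1) mt[OF that Kin(2)]])
      show "lines_meet (((*v) M) ` N) (std False 1 1)"
        unfolding M(4)[symmetric] by (rule meet_image[OF M(1) mt[OF that Kin(3)]])
    qed
    have A2img: "\<exists>p q. (p, q) \<noteq> (0, 0) \<and> ((*v) M) ` N = std False p q" if "N \<in> A2" for N
    proof -
      have "N = K1 \<or> N = K2 \<or> N = K3" using that unfolding A2 by simp
      thus ?thesis
      proof (elim disjE)
        assume "N = K1" thus ?thesis by (intro ex_std[OF _ M(2)[folded \<open>N = K1\<close>]]) simp
      next
        assume "N = K2" thus ?thesis by (intro ex_std[OF _ M(3)[folded \<open>N = K2\<close>]]) simp
      next
        assume "N = K3" thus ?thesis by (intro ex_std[OF _ M(4)[folded \<open>N = K3\<close>]]) simp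
      qed
    qed
    have h1: "\<forall>L\<in>A1. \<exists>p q. (p, q) \<noteq> (0, 0) \<and> ((*v) M) ` L = std True p q"
      by (intro ballI) (rule A1img)
    have h2: "\<forall>L\<in>A2. \<exists>p q. (p, q) \<noteq> (0, 0) \<and> ((*v) M) ` L = std False p q"
      by (intro ballI) (rule A2img)
    show ?thesis by (rule final[OF M(1) h1 h2])
  next
    case 3
    have "card A1 = 1" "card A2 = 1" using assms(5,6) 3 by simp_all
    then obtain L N where A1: "A1 = {L}" and A2: "A2 = {N}" by (meson card_1_singletonE)
    have Lin: "L \<in> A1" and Nin: "N \<in> A2" unfolding A1 A2 by simp_all
    have "L \<noteq> N" using assms(4) Lin Nin by auto
    obtain M :: "'k^4^4" where M: "invertible M" "((*v) M) ` L = std False 1 0" "((*v) M) ` N = std True 1 0"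
      using case11[OF lin(1)[OF Lin] lin(2)[OF Nin] mt[OF Lin Nin] \<open>L \<noteq> N\<close>] by meson
    have h1: "\<forall>L\<in>A1. \<exists>p q. (p, q) \<noteq> (0, 0) \<and> ((*v) M) ` L = std False p q"
    proof
      fix x assume "x \<in> A1" hence "x = L" unfolding A1 by simp
      thus "\<exists>p q. (p, q) \<noteq> (0, 0) \<and> ((*v) M) ` x = std False p q" by (intro ex_std[OF _ M(2)[folded \<open>x = L\<close>]]) simp
    qed
    have h2: "\<forall>L\<in>A2. \<exists>p q. (p, q) \<noteq> (0, 0) \<and> ((*v) M) ` L = std True p q"
    proof
      fix x assume "x \<in> A2" hence "x = N" unfolding A2 by simp
      thus "\<exists>p q. (p, q) \<noteq> (0, 0) \<and> ((*v) M) ` x = std True p q" by (intro ex_std[OF _ M(3)[folded \<open>x = N\<close>]]) simp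
    qed
    show ?thesis by (rule final[OF M(1) h1 h2])
  next
    case 4
    have "card A1 = 1" using assms(5) 4 by simp
    then obtain L where A1: "A1 = {L}" by (meson card_1_singletonE)
    have "card A2 = 2" using assms(6) 4 by simp
    then obtain N1 N2 where A2: "A2 = {N1, N2}" and "N1 \<noteq> N2" unfolding card_2_iff by blast
    have Lin: "L \<in> A1" and Nin: "N1 \<in> A2" "N2 \<in> A2" unfolding A1 A2 by simp_all
    obtain M :: "'k^4^4" where M: "invertible M" "((*v) M) ` L = std False 1 0" "((*v) M) ` N1 = std True 1 0"
       "((*v) M) ` N2 = std True 0 1"
      using case12[OF lin(1)[OF Lin] lin(2)[OF Nin(1)] lin(2)[OF Nin(2)] mt[OF Lin Nin(1)] mt[OF Lin Nin(2)]
        dj2[OF Nin \<open>N1 \<noteq> N2\<close>]] by meson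
    have h1: "\<forall>L\<in>A1. \<exists>p q. (p, q) \<noteq> (0, 0) \<and> ((*v) M) ` L = std False p q"
    proof
      fix x assume "x \<in> A1" hence "x = L" unfolding A1 by simp
      thus "\<exists>p q. (p, q) \<noteq> (0, 0) \<and> ((*v) M) ` x = std False p q" by (intro ex_std[OF _ M(2)[folded \<open>x = L\<close>]]) simp
    qed
    have h2: "\<forall>L\<in>A2. \<exists>p q. (p, q) \<noteq> (0, 0) \<and> ((*v) M) ` L = std True p q"
    proof
      fix x assume "x \<in> A2" hence "x = N1 \<or> x = N2" unfolding A2 by simp
      thus "\<exists>p q. (p, q) \<noteq> (0, 0) \<and> ((*v) M) ` x = std True p q"
      proof (elim disjE)
        assume "x = N1" thus ?thesis by (intro ex_std[OF _ M(3)[folded \<open>x = N1\<close>]]) simp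
      next
        assume "x = N2" thus ?thesis by (intro ex_std[OF _ M(4)[folded \<open>x = N2\<close>]]) simp
      qed
    qed
    show ?thesis by (rule final[OF M(1) h1 h2])
  next
    case 5
    have "card A1 = 2" "card A2 = 2" using assms(5,6) 5 by simp_all
    then obtain L1 L2 N1 N2 where A1: "A1 = {L1, L2}" and "L1 \<noteq> L2" and A2: "A2 = {N1, N2}" and "N1 \<noteq> N2"
      unfolding card_2_iff by blast
    have Lin: "L1 \<in> A1" "L2 \<in> A1" and Nin: "N1 \<in> A2" "N2 \<in> A2" unfolding A1 A2 by simp_all
    obtain M :: "'k^4^4" where M: "invertible M" "((*v) M) ` L1 = std False 1 0" "((*v) M) ` L2 = std False 0 1"
       "((*v) M) ` N1 = std True 1 0" "((*v) M) ` N2 = std True 0 1"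
      using case22[OF lin(1)[OF Lin(1)] lin(1)[OF Lin(2)] lin(2)[OF Nin(1)] lin(2)[OF Nin(2)]
        mt[OF Lin(1) Nin(1)] mt[OF Lin(1) Nin(2)] mt[OF Lin(2) Nin(1)] mt[OF Lin(2) Nin(2)]
        dj1[OF Lin \<open>L1 \<noteq> L2\<close>] dj2[OF Nin \<open>N1 \<noteq> N2\<close>]] by meson
    have h1: "\<forall>L\<in>A1. \<exists>p q. (p, q) \<noteq> (0, 0) \<and> ((*v) M) ` L = std False p q"
    proof
      fix x assume "x \<in> A1" hence "x = L1 \<or> x = L2" unfolding A1 by simp
      thus "\<exists>p q. (p, q) \<noteq> (0, 0) \<and> ((*v) M) ` x = std False p q"
      proof (elim disjE)
        assume "x = L1" thus ?thesis by (intro ex_std[OF _ M(2)[folded \<open>x = L1\<close>]]) simp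
      next
        assume "x = L2" thus ?thesis by (intro ex_std[OF _ M(3)[folded \<open>x = L2\<close>]]) simp
      qed
    qed
    have h2: "\<forall>L\<in>A2. \<exists>p q. (p, q) \<noteq> (0, 0) \<and> ((*v) M) ` L = std True p q"
    proof
      fix x assume "x \<in> A2" hence "x = N1 \<or> x = N2" unfolding A2 by simp
      thus "\<exists>p q. (p, q) \<noteq> (0, 0) \<and> ((*v) M) ` x = std True p q"
      proof (elim disjE)
        assume "x = N1" thus ?thesis by (intro ex_std[OF _ M(4)[folded \<open>x = N1\<close>]]) simp
      next
        assume "x = N2" thus ?thesis by (intro ex_std[OF _ M(5)[folded \<open>x = N2\<close>]]) simp
      qed
    qed
    show ?thesis by (rule final[OF M(1) h1 h2])
  qed
qed

end
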